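(* Let $t$ and $m$ be positive integers. Then, as formal power series in $q$, \[ \sum_{n=0}^{\infty}p_{mt,t}(n)q^{n}= \frac{1}{(q;q)_{\infty}}\sum_{n=0}^{\infty}(-1)^{n} q^{\frac{1}{2}(mn^{2}-(m-2)n)t}. \]
   Context: A partition $\lambda$ of a non-negative integer $n$ is a non-increasing sequence of positive integers (its parts) summing to $n$ (the empty partition is the unique partition of $0$). For positive integers $A$ and $a$, $\mathrm{mex}_{A,a}(\lambda)$ denotes the smallest positive integer congruent to $a$ modulo $A$ that is not a part of $\lambda$. Then $p_{A,a}(n)$ denotes the number of partitions $\lambda$ of $n$ satisfying $\mathrm{mex}_{A,a}(\lambda)\equiv a \pmod{2A}$. Also $(a;q)_\infty:=\prod_{j=0}^{\infty}(1-aq^j)$. *)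

theory Defs
  imports "HOL-Library.Multiset" "HOL-Computational_Algebra.Formal_Power_Series"
begin

definition partitions :: "nat \<Rightarrow> nat multiset set" where
  "partitions n = {P. (\<forall>x \<in># P. 0 < x) \<and> sum_mset P = n}"

definition mex :: "nat \<Rightarrow> nat \<Rightarrow> nat multiset \<Rightarrow> nat" where
  "mex A a P = (LEAST k. 0 < k \<and> k mod A = a mod A \<and> k \<notin># P)"

definition p_mex :: "nat \<Rightarrow> nat \<Rightarrow> nat \<Rightarrow> nat" where
  "p_mex A a n = card {P \<in> partitions n. mex A a P mod (2 * A) = a mod (2 * A)}"

text \<open>(q;q)_\<infinity> as a formal power series: the n-th coefficient of the infinite product
  is that of the finite product over j = 1..n (factors with j > n do not affect it).\<close>
definition qpoch_inf :: "rat fps" where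
  "qpoch_inf = Abs_fps (\<lambda>n. fps_nth (\<Prod>j\<in>{1..n}. (1 - fps_X ^ j)) n)"

definition theta_exp :: "nat \<Rightarrow> nat \<Rightarrow> nat \<Rightarrow> nat" where
  "theta_exp m t n = nat ((int m * int n ^ 2 - (int m - 2) * int n) * int t div 2)"

text \<open>The series \<Sum>_{n\<ge>0} (-1)^n q^{theta_exp m t n} as a formal power series.
  Since theta_exp m t n \<ge> n for m,t \<ge> 1, only n \<le> k contribute to q^k.\<close>
definition theta_series :: "nat \<Rightarrow> nat \<Rightarrow> rat fps" where
  "theta_series m t = Abs_fps (\<lambda>k. \<Sum>n\<in>{n. n \<le> k \<and> theta_exp m t n = k}. (-1) ^ n)"

end

theory Submission
  imports Defs
begin

lemma mem_le_sum_mset: "(x::nat) \<in># P \<Longrightarrow> x \<le> sum_mset P"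
  by (metis le_add1 sum_mset.remove)

lemma size_le_sum_mset: "(\<forall>x\<in>#P. 0 < (x::nat)) \<Longrightarrow> size P \<le> sum_mset P"
proof (induction P)
  case empty then show ?case by simp
next
  case (add x P) then show ?case by auto
qed

lemma fin_partitions: "finite (partitions n)"
proof -
  have "partitions n \<subseteq> mset ` {xs. set xs \<subseteq> {0..n} \<and> length xs \<le> n}"
  proof
    fix P assume P: "P \<in> partitions n"
    obtain xs where xs: "mset xs = P" using ex_mset by blast
    have Ps: "sum_mset P = n" "\<forall>x\<in>#P. 0 < x" using P unfolding partitions_def by auto
    have "set xs \<subseteq> {0..n}"
    proof
      fix x assume "x \<in> set xs"
      then have "x \<in># P" using xs by auto
      then show "x \<in> {0..n}" using mem_le_sum_mset[of x P] Ps by simp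
    qed
    moreover have "length xs \<le> n" using Ps xs size_le_sum_mset[of P] by auto
    ultimately show "P \<in> mset ` {xs. set xs \<subseteq> {0..n} \<and> length xs \<le> n}" using xs by blast
  qed
  then show ?thesis by (rule finite_subset) (intro finite_imageI finite_lists_length_le, simp)
qed

definition part_le :: "nat \<Rightarrow> nat \<Rightarrow> nat multiset set" where
  "part_le N n = {P \<in> partitions n. \<forall>x\<in>#P. x \<le> N}"

lemma fin_part_le: "finite (part_le N n)"
  unfolding part_le_def by (rule finite_subset[OF _ fin_partitions]) blast

lemma part_le_0: "part_le 0 n = (if n = 0 then {{#}} else {})"
proof -
  have e: "(\<forall>x\<in>#P. 0 < x) \<and> (\<forall>x\<in>#P. x \<le> (0::nat)) \<longleftrightarrow> P = {#}" for P
    by (cases P) auto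
  have "part_le 0 n = {P. P = {#} \<and> sum_mset P = n}" 
  proof (rule set_eqI)
    fix P show "P \<in> part_le 0 n \<longleftrightarrow> P \<in> {P. P = {#} \<and> sum_mset P = n}"
      using e[of P] unfolding part_le_def partitions_def by auto
  qed
  then show ?thesis by auto
qed

lemma card_part_le_Suc:
  "card (part_le (Suc N) n) = card (part_le N n) + (if n < Suc N then 0 else card (part_le (Suc N) (n - Suc N)))"
proof -
  let ?A = "{P \<in> part_le (Suc N) n. Suc N \<in># P}"
  have U: "part_le (Suc N) n = part_le N n \<union> ?A"
    unfolding part_le_def by (auto simp: le_Suc_eq)
  have D: "part_le N n \<inter> ?A = {}" unfolding part_le_def by auto
  have cA: "card ?A = (if n < Suc N then 0 else card (part_le (Suc N) (n - Suc N)))"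
  proof (cases "n < Suc N")
    case True
    then have "?A = {}" unfolding part_le_def partitions_def using mem_le_sum_mset by fastforce
    then show ?thesis using True by (metis card.empty)
  next
    case False
    have "?A = add_mset (Suc N) ` part_le (Suc N) (n - Suc N)"
    proof
      show "?A \<subseteq> add_mset (Suc N) ` part_le (Suc N) (n - Suc N)"
      proof
        fix P assume P: "P \<in> ?A"
        then have "P = add_mset (Suc N) (P - {#Suc N#})" by simp
        moreover have "P - {#Suc N#} \<in> part_le (Suc N) (n - Suc N)"
          using P unfolding part_le_def partitions_def
          by (auto dest: in_diffD) (metis add_diff_cancel_left' sum_mset.remove)
        ultimately show "P \<in> add_mset (Suc N) ` part_le (Suc N) (n - Suc N)" by blast
      qed
      show "add_mset (Suc N) ` part_le (Suc N) (n - Suc N) \<subseteq> ?A"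
        using False unfolding part_le_def partitions_def by auto
    qed
    then have "card ?A = card (part_le (Suc N) (n - Suc N))"
      by (simp add: card_image inj_on_def)
    then show ?thesis using False by simp
  qed
  have "card (part_le (Suc N) n) = card (part_le N n \<union> ?A)" using U by (rule arg_cong)
  also have "\<dots> = card (part_le N n) + card ?A"
    by (rule card_Un_disjoint) (use fin_part_le D in auto)
  finally show ?thesis unfolding cA .
qed

definition Qp :: "nat \<Rightarrow> rat fps" where "Qp N = (\<Prod>j\<in>{1..N}. (1 - fps_X ^ j))"
definition Rp :: "nat \<Rightarrow> rat fps" where "Rp N = Abs_fps (\<lambda>n. of_nat (card (part_le N n)))"

lemma Rp_rec: "(1 - fps_X ^ Suc N) * Rp (Suc N) = Rp N"
  by (simp add: fps_eq_iff algebra_simps fps_X_power_mult_nth Rp_def card_part_le_Suc)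

lemma Qp_Suc: "Qp (Suc N) = Qp N * (1 - fps_X ^ Suc N)" unfolding Qp_def
  by (simp add: mult.commute)

lemma QR: "Qp N * Rp N = 1"
proof (induction N)
  case 0 then show ?case by (simp add: Qp_def Rp_def fps_eq_iff part_le_0)
next
  case (Suc N)
  show ?case using Suc Rp_rec Qp_Suc by (metis mult.assoc)
qed

lemma Qp_stable: "i \<le> N \<Longrightarrow> fps_nth (Qp N) i = fps_nth (Qp i) i"
proof (induction N)
  case 0 then show ?case by simp
next
  case (Suc N)
  show ?case
  proof (cases "i = Suc N")
    case False
    have "Qp (Suc N) = Qp N - Qp N * fps_X ^ Suc N" unfolding Qp_Suc by (simp only: right_diff_distrib mult_1_right)
    moreover have "fps_nth (Qp N * fps_X ^ Suc N) i = 0"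
      using fps_X_power_mult_right_nth[of "Qp N" "Suc N" i] False Suc.prems by simp
    ultimately show ?thesis using Suc False by simp
  qed simp
qed

definition Pg :: "rat fps" where "Pg = Abs_fps (\<lambda>n. of_nat (card (partitions n)))"

lemma part_le_big: "n \<le> N \<Longrightarrow> part_le N n = partitions n"
proof -
  assume nN: "n \<le> N"
  have "\<forall>x\<in>#P. x \<le> N" if "P \<in> partitions n" for P
  proof
    fix x assume "x \<in># P"
    then have "x \<le> sum_mset P" by (rule mem_le_sum_mset)
    then show "x \<le> N" using that nN unfolding partitions_def by simp
  qed
  then show ?thesis unfolding part_le_def by blast
qed

lemma qpoch_Qp: "fps_nth qpoch_inf i = fps_nth (Qp i) i"
  by (simp add: qpoch_inf_def Qp_def)

lemma euler: "qpoch_inf * Pg = 1"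
proof (rule fps_ext)
  fix n
  have "fps_nth (qpoch_inf * Pg) n = (\<Sum>i=0..n. fps_nth (Qp n) i * fps_nth (Rp n) (n - i))"
    unfolding fps_mult_nth
  proof (intro sum.cong refl)
    fix i assume "i \<in> {0..n}"
    then have i: "i \<le> n" by simp
    have "fps_nth qpoch_inf i = fps_nth (Qp n) i" using Qp_stable[OF i] qpoch_Qp by simp
    moreover have "fps_nth Pg (n - i) = fps_nth (Rp n) (n - i)"
      unfolding Pg_def Rp_def using part_le_big[of "n - i" n] by simp
    ultimately show "fps_nth qpoch_inf i * fps_nth Pg (n - i) = fps_nth (Qp n) i * fps_nth (Rp n) (n - i)"
      by simp
  qed
  also have "\<dots> = fps_nth (Qp n * Rp n) n" by (simp add: fps_mult_nth)
  finally show "fps_nth (qpoch_inf * Pg) n = fps_nth 1 n" by (simp add: QR)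
qed

lemma Pg_inv: "inverse qpoch_inf = Pg"
proof -
  have "fps_nth qpoch_inf 0 = 1" by (simp add: qpoch_inf_def)
  then have "inverse qpoch_inf * qpoch_inf = 1" by (intro inverse_mult_eq_1) simp
  then have "inverse qpoch_inf = inverse qpoch_inf * (qpoch_inf * Pg)" by (simp add: euler)
  also have "\<dots> = Pg" by (simp add: mult.assoc[symmetric] \<open>inverse qpoch_inf * qpoch_inf = 1\<close>)
  finally show ?thesis .
qed


primrec Mv :: "nat \<Rightarrow> nat \<Rightarrow> nat \<Rightarrow> nat multiset" where
  "Mv m t 0 = {#}"
| "Mv m t (Suc j) = add_mset (t + j * (m * t)) (Mv m t j)"

lemma Mv_sum_int: "int (sum_mset (Mv m t j)) * 2 = (int m * int j ^ 2 - (int m - 2) * int j) * int t"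
  by (induction j) (auto simp: algebra_simps power2_eq_square)

lemma Mv_sum: "sum_mset (Mv m t j) = theta_exp m t j"
proof -
  have "theta_exp m t j = nat (int (sum_mset (Mv m t j)) * 2 div 2)"
    unfolding theta_exp_def Mv_sum_int ..
  then show ?thesis by (simp del: of_nat_sum_mset)
qed

lemma Mv_sum_ge: "0 < t \<Longrightarrow> j \<le> sum_mset (Mv m t j)"
  by (induction j) auto

lemma set_Mv: "set_mset (Mv m t j) = (\<lambda>i. t + i * (m * t)) ` {..<j}"
  by (induction j) (auto simp: lessThan_Suc)

lemma add_mset_subseteq: "x \<notin># A \<Longrightarrow> (add_mset x A \<subseteq># P \<longleftrightarrow> A \<subseteq># P \<and> x \<in># P)"
proof -
  assume x: "x \<notin># A"
  have "A \<subseteq># P - {#x#} \<longleftrightarrow> A \<subseteq># P"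
  proof
    assume "A \<subseteq># P - {#x#}" then show "A \<subseteq># P" by (meson diff_subset_eq_self subset_mset.order_trans)
  next
    assume A: "A \<subseteq># P"
    show "A \<subseteq># P - {#x#}" unfolding subseteq_mset_def
    proof
      fix y
      show "count A y \<le> count (P - {#x#}) y"
      proof (cases "y = x")
        case True
        have "count A x = 0" using x by (simp add: count_eq_zero_iff)
        then show ?thesis using True by simp
      next
        case False then show ?thesis using A by (simp add: subseteq_mset_def)
      qed
    qed
  qed
  then show ?thesis by (simp add: insert_subset_eq_iff conj_commute)
qed

lemma Mv_subseteq:
  assumes "0 < t" "0 < m"
  shows "Mv m t j \<subseteq># P \<longleftrightarrow> (\<forall>i<j. t + i * (m * t) \<in># P)"
proof (induction j)
  case 0 then show ?case by simp
next
  case (Suc j)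
  have "t + j * (m * t) \<notin># Mv m t j"
  proof
    assume "t + j * (m * t) \<in># Mv m t j"
    then obtain i where "i < j" "t + j * (m * t) = t + i * (m * t)" by (auto simp: set_Mv)
    then show False using assms by simp
  qed
  then show ?case using Suc by (simp add: add_mset_subseteq less_Suc_eq) blast
qed


lemma cand_iff:
  assumes t: "0 < t" and m: "0 < (m::nat)"
  shows "(0 < k \<and> k mod (m*t) = t mod (m*t)) \<longleftrightarrow> (\<exists>j. k = t + j*(m*t))"
proof
  assume k: "0 < k \<and> k mod (m*t) = t mod (m*t)"
  have "t \<le> k"
  proof (rule ccontr)
    assume "\<not> t \<le> k"
    then have kt: "k < t" by simp
    have tm: "t \<le> m * t" using m by simp
    have "k mod (m*t) = k" using kt tm by (metis mod_less order_less_le_trans)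
    moreover have "t mod (m*t) = t \<or> t mod (m*t) = 0"
    proof (cases "m = 1")
      case False then have "t < m*t" using m t by simp
      then show ?thesis by simp
    qed simp
    ultimately show False using k kt by auto
  qed
  then have "m*t dvd k - t" using k mod_eq_dvd_iff_nat by blast
  then obtain j where "k - t = (m*t) * j" by (auto elim: dvdE)
  then have "k = t + j*(m*t)" using \<open>t \<le> k\<close> by (simp add: mult.commute)
  then show "\<exists>j. k = t + j*(m*t)" by blast
next
  assume "\<exists>j. k = t + j*(m*t)"
  then obtain j where "k = t + j*(m*t)" by blast
  then show "0 < k \<and> k mod (m*t) = t mod (m*t)" using t by simp
qed

definition dd :: "nat \<Rightarrow> nat \<Rightarrow> nat multiset \<Rightarrow> nat" where
  "dd m t P = (LEAST j. t + j*(m*t) \<notin># P)"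

lemma ex_notin:
  assumes t: "0 < t" and m: "0 < (m::nat)"
  shows "\<exists>j. t + j*(m*t) \<notin># P"
proof (rule exI, rule notI)
  let ?j = "sum_mset P"
  assume "t + ?j*(m*t) \<in># P"
  then have "t + ?j*(m*t) \<le> ?j" by (rule mem_le_sum_mset)
  moreover have "?j \<le> ?j*(m*t)" using m t by simp
  ultimately show False using t by simp
qed

lemma dd_notin: "0 < t \<Longrightarrow> 0 < m \<Longrightarrow> t + dd m t P * (m*t) \<notin># P"
  unfolding dd_def using ex_notin by (metis (mono_tags, lifting) LeastI_ex)

lemma dd_le_iff:
  assumes t: "0 < t" and m: "0 < (m::nat)"
  shows "j \<le> dd m t P \<longleftrightarrow> (\<forall>i<j. t + i*(m*t) \<in># P)"
proof
  assume "j \<le> dd m t P"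
  then show "\<forall>i<j. t + i*(m*t) \<in># P" unfolding dd_def
    using not_less_Least by (metis (mono_tags, lifting) order_less_le_trans)
next
  assume H: "\<forall>i<j. t + i*(m*t) \<in># P"
  show "j \<le> dd m t P"
  proof (rule ccontr)
    assume "\<not> j \<le> dd m t P"
    then have "dd m t P < j" by simp
    then show False using H dd_notin[OF t m, of P] by blast
  qed
qed

lemma mex_eq:
  assumes t: "0 < t" and m: "0 < (m::nat)"
  shows "mex (m*t) t P = t + dd m t P * (m*t)"
  unfolding mex_def
proof (rule Least_equality)
  show "0 < t + dd m t P * (m*t) \<and> (t + dd m t P * (m*t)) mod (m*t) = t mod (m*t) \<and> t + dd m t P * (m*t) \<notin># P"
    using dd_notin[OF t m] t by simp
next
  fix y assume y: "0 < y \<and> y mod (m*t) = t mod (m*t) \<and> y \<notin># P"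
  then obtain j where j: "y = t + j*(m*t)" using cand_iff[OF t m] by blast
  then have "t + j*(m*t) \<notin># P" using y by simp
  then have "dd m t P \<le> j" unfolding dd_def by (rule Least_le)
  then show "t + dd m t P * (m*t) \<le> y" using j by simp
qed

lemma parity:
  assumes t: "0 < t" and m: "0 < (m::nat)"
  shows "(t + d*(m*t)) mod (2*(m*t)) = t mod (2*(m*t)) \<longleftrightarrow> even d"
proof (cases "even d")
  case True
  then obtain q where "d = 2*q" by blast
  then have eq: "t + d*(m*t) = t + q*(2*(m*t))" by simp
  have "(t + d*(m*t)) mod (2*(m*t)) = t mod (2*(m*t))" unfolding eq by (rule mod_mult_self1)
  then show ?thesis using True by simp
next
  case False
  then obtain q where "d = 2*q + 1" using oddE by blast
  then have e: "t + d*(m*t) = (t + m*t) + q*(2*(m*t))" by (simp add: algebra_simps)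
  have "(t + m*t) mod (2*(m*t)) \<noteq> t mod (2*(m*t))"
  proof
    assume "(t + m*t) mod (2*(m*t)) = t mod (2*(m*t))"
    then have "2*(m*t) dvd (t + m*t) - t" by (metis le_add1 mod_eq_dvd_iff_nat)
    then have "2*(m*t) dvd m*t" by simp
    then have "2*(m*t) \<le> m*t" using m t by (intro dvd_imp_le) simp_all
    then show False using m t by simp
  qed
  then show ?thesis using False e by (metis mod_mult_self1)
qed

lemma dd_le_n:
  assumes t: "0 < t" and m: "0 < (m::nat)" and P: "P \<in> partitions n"
  shows "dd m t P \<le> n"
proof (rule ccontr)
  assume "\<not> dd m t P \<le> n"
  then have "t + n*(m*t) \<in># P" using dd_le_iff[OF t m, of "Suc n" P] by auto
  then have "t + n*(m*t) \<le> n" using mem_le_sum_mset P unfolding partitions_def by fastforce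
  moreover have "n \<le> n*(m*t)" using m t by simp
  ultimately show False using t by simp
qed


lemma alt_sum: "(if even d then 1 else 0 :: rat) = (\<Sum>j\<le>d. (-1)^j)"
  by (induction d) auto

lemma indicator_sum:
  assumes t: "0 < t" and m: "0 < (m::nat)" and P: "P \<in> partitions n"
  shows "(if even (dd m t P) then 1 else 0 :: rat) = (\<Sum>j\<le>n. if Mv m t j \<subseteq># P then (-1)^j else 0)"
proof -
  have d: "dd m t P \<le> n" by (rule dd_le_n[OF t m P])
  have "(\<Sum>j\<le>n. if Mv m t j \<subseteq># P then (-1)^j else 0 :: rat) = (\<Sum>j\<le>n. if j \<le> dd m t P then (-1)^j else 0)"
    using Mv_subseteq[OF t m] dd_le_iff[OF t m] by simp
  also have "\<dots> = (\<Sum>j\<in>{j\<in>{..n}. j \<le> dd m t P}. (-1)^j)"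
    by (rule sum.inter_filter[symmetric]) simp
  also have "{j\<in>{..n}. j \<le> dd m t P} = {..dd m t P}" using d by auto
  finally show ?thesis using alt_sum by simp
qed

lemma card_contain:
  assumes t: "0 < t"
  shows "card {P \<in> partitions n. Mv m t j \<subseteq># P} =
    (if sum_mset (Mv m t j) \<le> n then card (partitions (n - sum_mset (Mv m t j))) else 0)"
proof (cases "sum_mset (Mv m t j) \<le> n")
  case True
  let ?M = "Mv m t j"
  have pos: "\<forall>x\<in>#?M. 0 < x" using t by (auto simp: set_Mv)
  have "{P \<in> partitions n. ?M \<subseteq># P} = (\<lambda>Q. Q + ?M) ` partitions (n - sum_mset ?M)"
  proof
    show "{P \<in> partitions n. ?M \<subseteq># P} \<subseteq> (\<lambda>Q. Q + ?M) ` partitions (n - sum_mset ?M)"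
    proof
      fix P assume P: "P \<in> {P \<in> partitions n. ?M \<subseteq># P}"
      then have sub: "?M \<subseteq># P" and Pp: "\<forall>x\<in>#P. 0 < x" "sum_mset P = n"
        unfolding partitions_def by auto
      have "P = (P - ?M) + ?M" using sub by simp
      moreover have "P - ?M \<in> partitions (n - sum_mset ?M)"
        unfolding partitions_def using Pp sub by (auto dest: in_diffD simp: sum_mset_diff)
      ultimately show "P \<in> (\<lambda>Q. Q + ?M) ` partitions (n - sum_mset ?M)" by blast
    qed
    show "(\<lambda>Q. Q + ?M) ` partitions (n - sum_mset ?M) \<subseteq> {P \<in> partitions n. ?M \<subseteq># P}"
      using True pos unfolding partitions_def by auto
  qed
  moreover have "inj_on (\<lambda>Q. Q + ?M) (partitions (n - sum_mset ?M))"
    by (rule inj_onI) simp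
  ultimately show ?thesis using True by (simp add: card_image)
next
  case False
  have "{P \<in> partitions n. Mv m t j \<subseteq># P} = {}"
  proof (rule ccontr)
    assume "{P \<in> partitions n. Mv m t j \<subseteq># P} \<noteq> {}"
    then obtain P where P: "P \<in> partitions n" "Mv m t j \<subseteq># P" by blast
    then obtain c where "P = Mv m t j + c" by (auto simp: subset_mset.le_iff_add)
    then have "sum_mset (Mv m t j) \<le> sum_mset P" by simp
    then show False using P False unfolding partitions_def by simp
  qed
  then show ?thesis using False by (metis card.empty)
qed


lemma lhs_coeff:
  assumes t: "0 < t" and m: "0 < (m::nat)"
  shows "(of_nat (p_mex (m * t) t n) :: rat) =
    (\<Sum>j\<le>n. if theta_exp m t j \<le> n then (-1)^j * fps_nth Pg (n - theta_exp m t j) else 0)"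
proof -
  have set_eq: "{P \<in> partitions n. mex (m*t) t P mod (2 * (m*t)) = t mod (2 * (m*t))}
      = {P \<in> partitions n. even (dd m t P)}"
    using mex_eq[OF t m] parity[OF t m] by simp
  have "(of_nat (p_mex (m * t) t n) :: rat) = of_nat (card {P \<in> partitions n. even (dd m t P)})"
    unfolding p_mex_def set_eq ..
  also have "\<dots> = (\<Sum>P\<in>partitions n. if even (dd m t P) then 1 else 0)"
    using sum.inter_filter[of "partitions n" "\<lambda>_. (1::rat)" "\<lambda>P. even (dd m t P)"] fin_partitions by simp
  also have "\<dots> = (\<Sum>P\<in>partitions n. \<Sum>j\<le>n. if Mv m t j \<subseteq># P then (-1)^j else 0)"
    by (rule sum.cong[OF refl]) (rule indicator_sum[OF t m])
  also have "\<dots> = (\<Sum>j\<le>n. \<Sum>P\<in>partitions n. if Mv m t j \<subseteq># P then (-1)^j else 0)"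
    by (rule sum.swap)
  also have "\<dots> = (\<Sum>j\<le>n. (-1)^j * of_nat (card {P \<in> partitions n. Mv m t j \<subseteq># P}))"
  proof (rule sum.cong[OF refl])
    fix j
    show "(\<Sum>P\<in>partitions n. if Mv m t j \<subseteq># P then (-1)^j else 0 :: rat) =
        (-1)^j * of_nat (card {P \<in> partitions n. Mv m t j \<subseteq># P})"
      using sum.inter_filter[of "partitions n" "\<lambda>_. (-1::rat)^j" "\<lambda>P. Mv m t j \<subseteq># P"] fin_partitions
      by (simp add: mult.commute)
  qed
  also have "\<dots> = (\<Sum>j\<le>n. if theta_exp m t j \<le> n then (-1)^j * fps_nth Pg (n - theta_exp m t j) else 0)"
    by (rule sum.cong[OF refl]) (simp add: card_contain[OF t] Mv_sum Pg_def)
  finally show ?thesis .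
qed

lemma theta_exp_ge: "0 < t \<Longrightarrow> j \<le> theta_exp m t j"
  using Mv_sum_ge Mv_sum by metis

lemma rhs_coeff:
  assumes t: "0 < t" and m: "0 < (m::nat)"
  shows "fps_nth (Pg * theta_series m t) n =
    (\<Sum>j\<le>n. if theta_exp m t j \<le> n then (-1)^j * fps_nth Pg (n - theta_exp m t j) else 0)"
proof -
  have th: "fps_nth (theta_series m t) i = (\<Sum>j\<le>n. if theta_exp m t j = i then (-1)^j else 0)"
    if i: "i \<le> n" for i
  proof -
    have "{j. j \<le> i \<and> theta_exp m t j = i} = {j\<in>{..n}. theta_exp m t j = i}"
      using i by (auto intro: order_trans[OF theta_exp_ge[OF t]])
    then show ?thesis unfolding theta_series_def
      using sum.inter_filter[of "{..n}" "\<lambda>j. (-1::rat)^j" "\<lambda>j. theta_exp m t j = i"] by simp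
  qed
  have "fps_nth (Pg * theta_series m t) n = fps_nth (theta_series m t * Pg) n" by (simp add: mult.commute)
  also have "\<dots> = (\<Sum>i=0..n. fps_nth (theta_series m t) i * fps_nth Pg (n - i))" by (rule fps_mult_nth)
  also have "\<dots> = (\<Sum>i=0..n. \<Sum>j\<le>n. if theta_exp m t j = i then (-1)^j * fps_nth Pg (n - i) else 0)"
    by (rule sum.cong[OF refl]) (auto simp: th sum_distrib_right intro!: sum.cong)
  also have "\<dots> = (\<Sum>j\<le>n. \<Sum>i=0..n. if theta_exp m t j = i then (-1)^j * fps_nth Pg (n - i) else 0)"
    by (rule sum.swap)
  also have "\<dots> = (\<Sum>j\<le>n. if theta_exp m t j \<le> n then (-1)^j * fps_nth Pg (n - theta_exp m t j) else 0)"
    by (rule sum.cong[OF refl]) (simp add: sum.delta)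
  finally show ?thesis .
qed

theorem lemma2p1:
  fixes t m :: nat
  assumes "0 < t" and "0 < m"
  shows "(Abs_fps (\<lambda>n. of_nat (p_mex (m * t) t n)) :: rat fps) = inverse qpoch_inf * theta_series m t"
  unfolding Pg_inv
  by (rule fps_ext) (simp add: lhs_coeff[OF assms] rhs_coeff[OF assms])

end
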